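(* Let $n\ge4$ and let $W_n$ be the wheel graph on $n$ vertices with signless Laplacian matrix \[Q=\left[\begin{array}{c|c} n-1 & \mathbf{1}^T \\ \hline \mathbf{1} & B \end{array}\right],\] where $B$ is the circulant matrix $\mathrm{circ}(3,1,0,\ldots,0,1)$ of order $n-1$. Then the Moore–Penrose inverse of $Q$ is \[Q^+=\frac{1}{4(n-1)} \left[\begin{array}{r|c} 5 & -\mathbf{1}^T \\ \hline -\mathbf{1} & J_{n-1}+2X \end{array}\right],\] where, with $C=\mathrm{circ}(1,0,\ldots,0,1)$ of order $n-1$, $X=2(CC^T+I_{n-1})^{-1}\left[ (n-1)I_{n-1}-J_{n-1}\right]=\mathrm{circ}(b_0,b_1,\ldots,b_{n-2})$ with, for $j=0,\ldots,n-2$, \[b_j=-\frac{2}{5}+\frac{2^{n-j}(n-1)}{\sqrt{5}}\left[\frac{(-3+\sqrt{5})^j}{2^{n-1}-(-3+\sqrt{5})^{n-1}}-\frac{(-3-\sqrt{5})^j}{2^{n-1}-(-3-\sqrt{5})^{n-1}}\right].\]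
   Context: The wheel graph $W_n$ ($n\ge4$) is a cycle on $n-1$ vertices together with a hub vertex adjacent to every cycle vertex; in the displayed form the hub is listed first and the cycle vertices follow in cyclic order. The signless Laplacian is $Q=D+A$, where $A$ is the adjacency matrix and $D$ the diagonal degree matrix. For $c_0,\dots,c_{k-1}$, $\mathrm{circ}(c_0,\ldots,c_{k-1})$ denotes the $k\times k$ circulant matrix whose $(i,j)$-entry is $c_{(j-i)\bmod k}$. $\mathbf 1$ is the all-ones column vector of length $n-1$, $J_{n-1}$ the $(n-1)\times(n-1)$ all-ones matrix, $I_{n-1}$ the identity. The Moore–Penrose inverse $A^+$ of a real matrix $A$ is the unique matrix with $AA^+A=A$, $A^+AA^+=A^+$, $(AA^+)^T=AA^+$, $(A^+A)^T=A^+A$. *)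

theory Defs
  imports Complex_Main "Jordan_Normal_Form.Matrix"
begin

definition circ_mat :: "nat \<Rightarrow> (nat \<Rightarrow> real) \<Rightarrow> real mat" where
  "circ_mat k c = mat k k (\<lambda>(i, j). c ((j + k - i) mod k))"

definition ones_mat :: "nat \<Rightarrow> nat \<Rightarrow> real mat" where
  "ones_mat r c = mat r c (\<lambda>_. 1)"

definition is_moore_penrose_inverse :: "real mat \<Rightarrow> real mat \<Rightarrow> bool" where
  "is_moore_penrose_inverse A P \<longleftrightarrow>
     P \<in> carrier_mat (dim_col A) (dim_row A) \<and>
     A * P * A = A \<and> P * A * P = P \<and>
     transpose_mat (A * P) = A * P \<and> transpose_mat (P * A) = P * A"

(* signless Laplacian of the wheel W_n, hub first, in the block form of the paper *)
definition wheel_B :: "nat \<Rightarrow> real mat" where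
  "wheel_B n = circ_mat (n - 1) (\<lambda>j. if j = 0 then 3 else if j = 1 \<or> j = n - 2 then 1 else 0)"

definition wheel_Q :: "nat \<Rightarrow> real mat" where
  "wheel_Q n = four_block_mat (mat 1 1 (\<lambda>_. real n - 1)) (ones_mat 1 (n - 1))
                              (ones_mat (n - 1) 1) (wheel_B n)"

definition wheel_C :: "nat \<Rightarrow> real mat" where
  "wheel_C n = circ_mat (n - 1) (\<lambda>j. if j = 0 \<or> j = n - 2 then 1 else 0)"

definition wheel_b :: "nat \<Rightarrow> nat \<Rightarrow> real" where
  "wheel_b n j = - 2 / 5 + (2 ^ (n - j) * (real n - 1) / sqrt 5) *
      ((-3 + sqrt 5) ^ j / (2 ^ (n - 1) - (-3 + sqrt 5) ^ (n - 1))
     - (-3 - sqrt 5) ^ j / (2 ^ (n - 1) - (-3 - sqrt 5) ^ (n - 1)))"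

definition wheel_X :: "nat \<Rightarrow> real mat" where
  "wheel_X n = circ_mat (n - 1) (wheel_b n)"

definition wheel_Qplus :: "nat \<Rightarrow> real mat" where
  "wheel_Qplus n = (1 / (4 * (real n - 1))) \<cdot>\<^sub>m
     four_block_mat (mat 1 1 (\<lambda>_. 5)) (- ones_mat 1 (n - 1))
                    (- ones_mat (n - 1) 1) (ones_mat (n - 1) (n - 1) + 2 \<cdot>\<^sub>m wheel_X n)"

end

theory Submission
  imports Defs "Jordan_Normal_Form.Determinant"
begin


lemma mod_sub_int: "y < m \<Longrightarrow> int ((x + m - y) mod m) = (int x - int y) mod int m"
proof -
  assume "y < m"
  then have "int (x + m - y) = int x - int y + int m" by simp
  then show ?thesis by (simp add: zmod_int)
qed

lemma mod_aux: "((a::int) mod m + m - b) mod m = (a - b) mod m"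
proof -
  have "a mod m + m - b = (a mod m - b) + m" by simp
  then have "(a mod m + m - b) mod m = (a mod m - b) mod m" by (metis mod_add_self2)
  then show ?thesis by (simp add: mod_diff_left_eq)
qed

lemma circ_mult:
  "circ_mat m a * circ_mat m c = circ_mat m (\<lambda>t. \<Sum>d<m. a d * c ((t + m - d) mod m))"
proof (rule eq_matI)
  fix i j assume i: "i < dim_row (circ_mat m (\<lambda>t. \<Sum>d<m. a d * c ((t + m - d) mod m)))"
    and j: "j < dim_col (circ_mat m (\<lambda>t. \<Sum>d<m. a d * c ((t + m - d) mod m)))"
  then have im: "i < m" and jm: "j < m" by (auto simp: circ_mat_def)
  have "(circ_mat m a * circ_mat m c) $$ (i, j) = (\<Sum>k<m. a ((k + m - i) mod m) * c ((j + m - k) mod m))"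
    using im jm by (simp add: circ_mat_def scalar_prod_def lessThan_atLeast0)
  also have "\<dots> = (\<Sum>d<m. a d * c (((j + m - i) mod m + m - d) mod m))"
  proof (rule sum.reindex_bij_witness[where i = "\<lambda>d. (i + d) mod m" and j = "\<lambda>k. (k + m - i) mod m"])
    fix k assume k: "k \<in> {..<m}"
    show "(i + (k + m - i) mod m) mod m = k"
    proof -
      have "int ((i + (k + m - i) mod m) mod m) = int k"
        using im k by (simp add: mod_sub_int zmod_int mod_add_right_eq)
      then show ?thesis by simp
    qed
    show "(k + m - i) mod m \<in> {..<m}" using im by simp
    show "a ((k + m - i) mod m) * c (((j + m - i) mod m + m - (k + m - i) mod m) mod m) =
          a ((k + m - i) mod m) * c ((j + m - k) mod m)"
    proof -
      have "int (((j + m - i) mod m + m - (k + m - i) mod m) mod m) = int ((j + m - k) mod m)"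
        using im k jm by (simp add: mod_sub_int mod_diff_left_eq mod_diff_right_eq)
      then show ?thesis by simp
    qed
  next
    fix d assume d: "d \<in> {..<m}"
    show "((i + d) mod m + m - i) mod m = d"
    proof -
      have "int (((i + d) mod m + m - i) mod m) = int d"
        using im d by (simp add: mod_sub_int zmod_int mod_aux)
      then show ?thesis by simp
    qed
    show "(i + d) mod m \<in> {..<m}" using im by simp
  qed
  also have "\<dots> = circ_mat m (\<lambda>t. \<Sum>d<m. a d * c ((t + m - d) mod m)) $$ (i, j)"
    using im jm by (simp add: circ_mat_def)
  finally show "(circ_mat m a * circ_mat m c) $$ (i, j) = circ_mat m (\<lambda>t. \<Sum>d<m. a d * c ((t + m - d) mod m)) $$ (i, j)" .
qed (auto simp: circ_mat_def)


lemma shift1: assumes "i < (m::nat)" shows "(\<Sum>k<m. f ((k + m - i) mod m)) = (\<Sum>d<m. f d)"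
proof (rule sum.reindex_bij_witness[where i = "\<lambda>d. (i + d) mod m" and j = "\<lambda>k. (k + m - i) mod m"])
  fix k assume k: "k \<in> {..<m}"
  have "int ((i + (k + m - i) mod m) mod m) = int k"
    using assms k by (simp add: mod_sub_int zmod_int mod_add_right_eq)
  then show "(i + (k + m - i) mod m) mod m = k" by simp
  show "(k + m - i) mod m \<in> {..<m}" using assms by simp
  show "f ((k + m - i) mod m) = f ((k + m - i) mod m)" by simp
next
  fix d assume d: "d \<in> {..<m}"
  have "int (((i + d) mod m + m - i) mod m) = int d"
    using assms d by (simp add: mod_sub_int zmod_int mod_aux)
  then show "((i + d) mod m + m - i) mod m = d" by simp
  show "(i + d) mod m \<in> {..<m}" using assms by simp
qed

lemma shift2: assumes "i < (m::nat)" shows "(\<Sum>k<m. f ((i + m - k) mod m)) = (\<Sum>d<m. f d)"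
proof (rule sum.reindex_bij_witness[where i = "\<lambda>d. (i + m - d) mod m" and j = "\<lambda>k. (i + m - k) mod m"])
  fix k assume k: "k \<in> {..<m}"
  have "int ((i + m - (i + m - k) mod m) mod m) = int k"
    using assms k by (simp add: mod_sub_int mod_diff_right_eq)
  then show "(i + m - (i + m - k) mod m) mod m = k" by simp
  show "(i + m - k) mod m \<in> {..<m}" using assms by simp
  show "f ((i + m - k) mod m) = f ((i + m - k) mod m)" by simp
next
  fix d assume d: "d \<in> {..<m}"
  have "int ((i + m - (i + m - d) mod m) mod m) = int d"
    using assms d by (simp add: mod_sub_int mod_diff_right_eq)
  then show "(i + m - (i + m - d) mod m) mod m = d" by simp
  show "(i + m - d) mod m \<in> {..<m}" using assms by simp
qed

lemma circ_index: "i < m \<Longrightarrow> j < m \<Longrightarrow> circ_mat m c $$ (i, j) = c ((j + m - i) mod m)"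
  by (simp add: circ_mat_def)

lemma circ_carrier[simp]: "circ_mat m c \<in> carrier_mat m m"
  by (simp add: circ_mat_def)

lemma circ_dims[simp]: "dim_row (circ_mat m c) = m" "dim_col (circ_mat m c) = m"
  by (simp_all add: circ_mat_def)

lemma circ_zero_iff: "i < (m::nat) \<Longrightarrow> j < m \<Longrightarrow> ((j + m - i) mod m = 0) = (i = j)"
proof -
  assume i: "i < m" and j: "j < m"
  have "((j + m - i) mod m = 0) = (int ((j + m - i) mod m) = 0)" by simp
  also have "\<dots> = ((int j - int i) mod int m = 0)" using i by (simp add: mod_sub_int)
  also have "\<dots> = (i = j)"
  proof
    assume h: "(int j - int i) mod int m = 0"
    show "i = j"
    proof (cases "i \<le> j")
      case True
      then have "(int j - int i) mod int m = int j - int i" using j by (intro mod_pos_pos_trivial) auto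
      then show ?thesis using h True by simp
    next
      case False
      have "(int j - int i) mod int m = (int j - int i + int m) mod int m" by simp
      also have "\<dots> = int j - int i + int m" using False i by (intro mod_pos_pos_trivial) auto
      finally show ?thesis using h i by simp
    qed
  qed simp
  finally show ?thesis .
qed

lemma circ_cong: "(\<And>t. t < m \<Longrightarrow> a t = c t) \<Longrightarrow> circ_mat m a = circ_mat m c"
  by (rule eq_matI) (auto simp: circ_mat_def)

lemma one_circ: "1\<^sub>m m = circ_mat m (\<lambda>t. if t = 0 then 1 else 0)"
  by (rule eq_matI) (auto simp: circ_mat_def circ_zero_iff)

lemma add_circ: "circ_mat m a + circ_mat m c = circ_mat m (\<lambda>t. a t + c t)"
  by (rule eq_matI) (auto simp: circ_mat_def)

lemma transpose_circ: "transpose_mat (circ_mat m c) = circ_mat m (\<lambda>t. c ((m - t) mod m))"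
proof (rule eq_matI)
  fix i j assume "i < dim_row (circ_mat m (\<lambda>t. c ((m - t) mod m)))"
    "j < dim_col (circ_mat m (\<lambda>t. c ((m - t) mod m)))"
  then have i: "i < m" and j: "j < m" by auto
  have "int ((m - (j + m - i) mod m) mod m) = int ((i + m - j) mod m)"
  proof -
    have le: "(j + m - i) mod m \<le> m" using i by simp
    have "int ((m - (j + m - i) mod m) mod m) = (int m - int ((j + m - i) mod m)) mod int m"
      using le by (simp add: zmod_int of_nat_diff)
    also have "\<dots> = (int m - (int j - int i) mod int m) mod int m" by (simp only: mod_sub_int[OF i])
    also have "\<dots> = (int m - (int j - int i)) mod int m" by (rule mod_diff_right_eq)
    also have "\<dots> = ((int i - int j) + int m) mod int m" by (simp add: algebra_simps)
    also have "\<dots> = (int i - int j) mod int m" by (rule mod_add_self2)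
    also have "\<dots> = int ((i + m - j) mod m)" using j by (simp add: mod_sub_int)
    finally show ?thesis .
  qed
  then have "(m - (j + m - i) mod m) mod m = (i + m - j) mod m" by simp
  then show "transpose_mat (circ_mat m c) $$ (i, j) = circ_mat m (\<lambda>t. c ((m - t) mod m)) $$ (i, j)"
    using i j by (simp add: circ_mat_def)
qed auto

definition betaW :: "nat \<Rightarrow> nat \<Rightarrow> real" where
  "betaW m d = (if d = 0 then 3 else if d = 1 \<or> d = m - 1 then 1 else 0)"

definition cW :: "nat \<Rightarrow> nat \<Rightarrow> real" where
  "cW m d = (if d = 0 \<or> d = m - 1 then 1 else 0)"

lemma wheel_B_circ: "wheel_B (m + 1) = circ_mat m (betaW m)"
proof -
  have e: "m + 1 - 2 = m - 1" by simp
  show ?thesis unfolding wheel_B_def betaW_def e by simp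
qed

lemma wheel_C_circ: "wheel_C (m + 1) = circ_mat m (cW m)"
proof -
  have e: "m + 1 - 2 = m - 1" by simp
  show ?thesis unfolding wheel_C_def cW_def e by simp
qed

lemma sum3: assumes "m \<ge> 3" shows "(\<Sum>d<m. betaW m d * f d) = 3 * f 0 + f 1 + f (m - 1)"
proof -
  have "\<And>d. betaW m d * f d = (if d = 0 then 3 * f 0 else 0) + (if d = 1 then f 1 else 0)
     + (if d = m - 1 then f (m - 1) else 0)"
    using assms by (auto simp: betaW_def)
  then have "(\<Sum>d<m. betaW m d * f d) = (\<Sum>d<m. (if d = 0 then 3 * f 0 else 0) + (if d = 1 then f 1 else 0)
     + (if d = m - 1 then f (m - 1) else 0))" by simp
  also have "\<dots> = 3 * f 0 + f 1 + f (m - 1)"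
    using assms by (simp add: sum.distrib)
  finally show ?thesis .
qed

lemma sum2: assumes "m \<ge> 3" shows "(\<Sum>d<m. cW m d * f d) = f 0 + f (m - 1)"
proof -
  have "\<And>d. cW m d * f d = (if d = 0 then f 0 else 0) + (if d = m - 1 then f (m - 1) else 0)"
    using assms by (auto simp: cW_def)
  then have "(\<Sum>d<m. cW m d * f d) = (\<Sum>d<m. (if d = 0 then f 0 else 0)
     + (if d = m - 1 then f (m - 1) else 0))" by simp
  also have "\<dots> = f 0 + f (m - 1)"
    using assms by (simp add: sum.distrib)
  finally show ?thesis .
qed

lemma CCT: assumes "m \<ge> 3"
  shows "wheel_C (m + 1) * transpose_mat (wheel_C (m + 1)) + 1\<^sub>m m = wheel_B (m + 1)"
proof -
  let ?c' = "\<lambda>t. cW m ((m - t) mod m)"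
  have "wheel_C (m + 1) * transpose_mat (wheel_C (m + 1)) + 1\<^sub>m m
      = circ_mat m (\<lambda>t. (\<Sum>d<m. cW m d * ?c' ((t + m - d) mod m)) + (if t = 0 then 1 else 0))"
    unfolding wheel_C_circ transpose_circ circ_mult one_circ add_circ by simp
  also have "\<dots> = circ_mat m (betaW m)"
  proof (rule circ_cong)
    fix t assume t: "t < m"
    have e: "(\<Sum>d<m. cW m d * ?c' ((t + m - d) mod m)) = ?c' t + ?c' ((t + 1) mod m)"
      using assms t by (simp add: sum2)
    show "(\<Sum>d<m. cW m d * ?c' ((t + m - d) mod m)) + (if t = 0 then 1 else 0) = betaW m t"
      unfolding e
    proof -
      consider "t = 0" | "t = 1" | "t = m - 1" | "2 \<le> t \<and> t < m - 1" using t assms by linarith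
      then show "?c' t + ?c' ((t + 1) mod m) + (if t = 0 then 1 else 0) = betaW m t"
      proof cases
        case 1 then show ?thesis using assms by (simp add: cW_def betaW_def)
      next
        case 2 then show ?thesis using assms by (cases "m = 3") (auto simp: cW_def betaW_def)
      next
        case 3 then show ?thesis using assms by (simp add: cW_def betaW_def)
      next
        case 4
        then have "(t + 1) mod m = t + 1" "(m - t) mod m = m - t" "(m - (t + 1)) mod m = m - (t + 1)"
          by auto
        then show ?thesis using 4 assms by (simp add: cW_def betaW_def) arith
      qed
    qed
  qed
  finally show ?thesis by (simp only: wheel_B_circ)
qed



definition r1 :: real where "r1 = (-3 + sqrt 5) / 2"
definition r2 :: real where "r2 = (-3 - sqrt 5) / 2"
definition gW :: "real \<Rightarrow> nat \<Rightarrow> nat \<Rightarrow> real" where "gW r m j = r ^ j / (1 - r ^ m)"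

lemma s5: "sqrt 5 * sqrt 5 = 5" by simp
lemma s5_gt: "2 < sqrt 5" by (rule real_less_rsqrt) simp
lemma s5_lt: "sqrt 5 < 3" by (rule real_less_lsqrt) simp_all

lemma r1_2: "-3 + sqrt 5 = 2 * r1" by (simp add: r1_def)
lemma r2_2: "-3 - sqrt 5 = 2 * r2" by (simp add: r2_def)

lemma r1_q: "r1 * r1 + 3 * r1 + 1 = 0"
proof -
  have "4 * (r1 * r1 + 3 * r1 + 1) = (2*r1) * (2*r1) + 6 * (2*r1) + 4" by (simp add: algebra_simps)
  also have "\<dots> = (-3 + sqrt 5) * (-3 + sqrt 5) + 6 * (-3 + sqrt 5) + 4" by (simp only: r1_2)
  also have "\<dots> = sqrt 5 * sqrt 5 - 5" by (simp add: algebra_simps)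
  also have "\<dots> = 0" by simp
  finally show ?thesis by simp
qed

lemma r2_q: "r2 * r2 + 3 * r2 + 1 = 0"
proof -
  have "4 * (r2 * r2 + 3 * r2 + 1) = (2*r2) * (2*r2) + 6 * (2*r2) + 4" by (simp add: algebra_simps)
  also have "\<dots> = (-3 - sqrt 5) * (-3 - sqrt 5) + 6 * (-3 - sqrt 5) + 4" by (simp only: r2_2)
  also have "\<dots> = sqrt 5 * sqrt 5 - 5" by (simp add: algebra_simps)
  also have "\<dots> = 0" by simp
  finally show ?thesis by simp
qed

lemma r12: "r1 * r2 = 1"
proof -
  have "4 * (r1 * r2) = (2*r1) * (2*r2)" by simp
  also have "\<dots> = (-3 + sqrt 5) * (-3 - sqrt 5)" by (simp only: r1_2 r2_2)
  also have "\<dots> = 9 - sqrt 5 * sqrt 5" by (simp add: algebra_simps)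
  also have "\<dots> = 4" by simp
  finally show ?thesis by simp
qed

lemma r1_r2: "r1 - r2 = sqrt 5" by (simp add: r1_def r2_def field_simps)

lemma r1_pow: assumes "m > 0" shows "r1 ^ m \<noteq> 1"
proof -
  have a: "0 < \<bar>r1\<bar>" "\<bar>r1\<bar> < 1" using s5_gt s5_lt by (auto simp: r1_def)
  obtain k where "m = Suc k" using assms by (cases m) auto
  then have "\<bar>r1\<bar> ^ m < 1" using a power_Suc_less_one by blast
  then have "\<bar>r1 ^ m\<bar> < 1" by (simp add: power_abs)
  then show ?thesis by auto
qed

lemma r2_pow: assumes "m > 0" shows "r2 ^ m \<noteq> 1"
proof -
  have a: "1 < \<bar>r2\<bar>" using s5_gt s5_lt by (auto simp: r2_def)
  then have "1 < \<bar>r2\<bar> ^ m" using assms by (simp add: one_less_power)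
  then have "1 < \<bar>r2 ^ m\<bar>" by (simp add: power_abs)
  then show ?thesis by auto
qed

lemma div3: "3 * (x / d) + y / d + z / (d::real) = (3 * x + y + z) / d"
  by (simp add: add_divide_distrib)

lemma g_mid: assumes q: "r * r + 3 * r + 1 = 0"
  shows "3 * gW r m (s + 1) + gW r m s + gW r m (s + 2) = 0"
proof -
  have "3 * r ^ (s + 1) + r ^ s + r ^ (s + 2) = r ^ s * (r * r + 3 * r + 1)"
    by (simp add: power_add power2_eq_square algebra_simps)
  then show ?thesis unfolding gW_def div3 using q by simp
qed

lemma g_R2: assumes q: "r * r + 3 * r + 1 = 0" and ne: "r ^ m \<noteq> 1" and m: "m = s + 2"
  shows "3 * gW r m (s + 1) + gW r m s + gW r m 0 = 1"
proof -
  have p1: "r ^ (s + 1) = r ^ s * r" and p2: "r ^ m = r ^ s * (r * r)"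
    unfolding m by (simp_all add: power_add power2_eq_square)
  have "3 * r ^ (s + 1) + r ^ s + r ^ 0 = r ^ s * (r * r + 3 * r + 1) + (1 - r ^ m)"
    unfolding p1 p2 by (simp add: algebra_simps)
  also have "\<dots> = 1 - r ^ m" using q by simp
  finally have "3 * r ^ (s + 1) + r ^ s + r ^ 0 = 1 - r ^ m" .
  moreover have "1 - r ^ m \<noteq> 0" using ne by simp
  ultimately show ?thesis unfolding gW_def div3 by simp
qed

lemma g_R3: assumes q: "r * r + 3 * r + 1 = 0" and ne: "r ^ m \<noteq> 1" and m: "m = s + 2"
  and rr: "r * r' = 1"
  shows "3 * gW r m 0 + gW r m (s + 1) + gW r m 1 = - r'"
proof -
  have p1: "r ^ (s + 1) = r ^ s * r" and p2: "r ^ m = r ^ s * (r * r)"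
    unfolding m by (simp_all add: power_add power2_eq_square)
  have "r * (3 * r ^ 0 + r ^ (s + 1) + r ^ 1) = (r * r + 3 * r + 1) - (1 - r ^ m)"
    unfolding p1 p2 by (simp add: algebra_simps)
  also have "\<dots> = - (1 - r ^ m)" using q by simp
  finally have e: "r * (3 * r ^ 0 + r ^ (s + 1) + r ^ 1) = - (1 - r ^ m)" .
  have nz: "1 - r ^ m \<noteq> 0" using ne by simp
  have "r * (3 * gW r m 0 + gW r m (s + 1) + gW r m 1) = -1"
    unfolding gW_def div3 using e nz by (simp add: divide_simps)
  then have h: "r' * (r * (3 * gW r m 0 + gW r m (s + 1) + gW r m 1)) = - r'" by simp
  have "3 * gW r m 0 + gW r m (s + 1) + gW r m 1 = (r * r') * (3 * gW r m 0 + gW r m (s + 1) + gW r m 1)"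
    using rr by simp
  also have "\<dots> = r' * (r * (3 * gW r m 0 + gW r m (s + 1) + gW r m 1))" by (simp only: mult_ac)
  also have "\<dots> = - r'" by (rule h)
  finally show ?thesis .
qed

lemma b_term: assumes "j \<le> m" "r ^ m \<noteq> 1"
  shows "(2::real) ^ (m + 1 - j) * ((2 * r) ^ j / (2 ^ m - (2 * r) ^ m)) = 2 * gW r m j"
proof -
  have p: "(2::real) ^ (m + 1 - j) * 2 ^ j = 2 * 2 ^ m"
    using assms(1) by (simp add: power_add[symmetric])
  have "(2::real) ^ (m + 1 - j) * ((2 * r) ^ j / (2 ^ m - (2 * r) ^ m))
      = (2 ^ (m + 1 - j) * 2 ^ j) * r ^ j / (2 ^ m * (1 - r ^ m))"
    by (simp add: power_mult_distrib algebra_simps)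
  also have "\<dots> = 2 * r ^ j / (1 - r ^ m)" unfolding p by simp
  finally show ?thesis by (simp add: gW_def)
qed

lemma b_formula: assumes "j \<le> m" "m > 0"
  shows "wheel_b (m + 1) j = - 2 / 5 + (2 * real m / sqrt 5) * (gW r1 m j - gW r2 m j)"
proof -
  have e1: "m + 1 - 1 = m" by simp
  have e2: "real (m + 1) - 1 = real m" by simp
  have "wheel_b (m + 1) j = - 2 / 5 + (2 ^ (m + 1 - j) * real m / sqrt 5) *
      ((2 * r1) ^ j / (2 ^ m - (2 * r1) ^ m) - (2 * r2) ^ j / (2 ^ m - (2 * r2) ^ m))"
    unfolding wheel_b_def e1 e2 r1_2 r2_2 by simp
  also have "\<dots> = - 2 / 5 + (real m / sqrt 5) *
      ((2::real) ^ (m + 1 - j) * ((2 * r1) ^ j / (2 ^ m - (2 * r1) ^ m))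
      - (2::real) ^ (m + 1 - j) * ((2 * r2) ^ j / (2 ^ m - (2 * r2) ^ m)))"
    by (simp add: algebra_simps)
  also have "\<dots> = - 2 / 5 + (real m / sqrt 5) * (2 * gW r1 m j - 2 * gW r2 m j)"
    using b_term[OF assms(1) r1_pow[OF assms(2)]] b_term[OF assms(1) r2_pow[OF assms(2)]] by simp
  also have "\<dots> = - 2 / 5 + (2 * real m / sqrt 5) * (gW r1 m j - gW r2 m j)"
    by (simp add: field_simps)
  finally show ?thesis .
qed

lemma lin3: fixes b G1 G2 :: "nat \<Rightarrow> real" assumes "\<And>x. x \<in> {p, q, r} \<Longrightarrow> b x = - 2 / 5 + K * (G1 x - G2 x)"
  shows "3 * b p + b q + b r = - 2 + K * ((3 * G1 p + G1 q + G1 r) - (3 * G2 p + G2 q + G2 r))"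
  using assms[of p] assms[of q] assms[of r] by (simp add: algebra_simps)

lemma b_rec: assumes m: "m \<ge> 3" and t: "t < m"
  shows "3 * wheel_b (m + 1) t + wheel_b (m + 1) ((t + m - 1) mod m) + wheel_b (m + 1) ((t + 1) mod m)
    = 2 * (if t = 0 then real m else 0) - 2"
proof -
  let ?b = "wheel_b (m + 1)" and ?K = "2 * real m / sqrt 5"
  have bf: "\<And>x. x \<le> m \<Longrightarrow> ?b x = - 2 / 5 + ?K * (gW r1 m x - gW r2 m x)"
    using m by (intro b_formula) auto
  have mp: "m > 0" using m by simp
  have r21: "r2 * r1 = 1" using r12 by (simp add: mult.commute)
  obtain s where s: "m = s + 2" using m by (metis add.commute le_Suc_ex le_add1 numeral_3_eq_3 add_2_eq_Suc le_trans) 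
  consider "t = 0" | "t = m - 1" | "0 < t \<and> t < m - 1" using t by linarith
  then show ?thesis
  proof cases
    case 1
    have i: "(t + m - 1) mod m = s + 1" "(t + 1) mod m = 1" using 1 s by auto
    have "3 * ?b 0 + ?b (s + 1) + ?b 1 = - 2 + ?K * ((3 * gW r1 m 0 + gW r1 m (s + 1) + gW r1 m 1)
        - (3 * gW r2 m 0 + gW r2 m (s + 1) + gW r2 m 1))"
      by (rule lin3) (use bf s in auto)
    also have "\<dots> = - 2 + ?K * (- r2 - - r1)"
      using g_R3[OF r1_q r1_pow[OF mp] s r12] g_R3[OF r2_q r2_pow[OF mp] s r21] by simp
    also have "\<dots> = 2 * real m - 2" using r1_r2 by simp
    finally show ?thesis using 1 i by simp
  next
    case 2
    have tt: "t = s + 1" using 2 s by simp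
    have "t + m - 1 = s + m" using tt s by simp
    then have "(t + m - 1) mod m = (s + m) mod m" by simp
    also have "\<dots> = s mod m" by (rule mod_add_self2)
    also have "\<dots> = s" using s by simp
    finally have i: "t = s + 1" "(t + m - 1) mod m = s" "(t + 1) mod m = 0" using tt s by auto
    have "3 * ?b (s + 1) + ?b s + ?b 0 = - 2 + ?K * ((3 * gW r1 m (s + 1) + gW r1 m s + gW r1 m 0)
        - (3 * gW r2 m (s + 1) + gW r2 m s + gW r2 m 0))"
      by (rule lin3) (use bf s in auto)
    also have "\<dots> = - 2"
      using g_R2[OF r1_q r1_pow[OF mp] s] g_R2[OF r2_q r2_pow[OF mp] s] by simp
    finally show ?thesis using 2 i s by simp
  next
    case 3
    then obtain u where u: "t = u + 1" by (metis Suc_eq_plus1 gr0_implies_Suc)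
    have "t + m - 1 = u + m" using u by simp
    then have "(t + m - 1) mod m = (u + m) mod m" by simp
    also have "\<dots> = u mod m" by (rule mod_add_self2)
    also have "\<dots> = u" using 3 u by simp
    finally have i: "(t + m - 1) mod m = u" "(t + 1) mod m = u + 2" using 3 u s by auto
    have "3 * ?b (u + 1) + ?b u + ?b (u + 2) = - 2 + ?K * ((3 * gW r1 m (u + 1) + gW r1 m u + gW r1 m (u + 2))
        - (3 * gW r2 m (u + 1) + gW r2 m u + gW r2 m (u + 2)))"
      by (rule lin3) (use bf s 3 u in auto)
    also have "\<dots> = - 2"
      using g_mid[OF r1_q] g_mid[OF r2_q] by simp
    finally show ?thesis using 3 i u by simp
  qed
qed



lemma ones_carrier[simp]: "ones_mat r c \<in> carrier_mat r c"
  by (simp add: ones_mat_def)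
lemma ones_dims[simp]: "dim_row (ones_mat r c) = r" "dim_col (ones_mat r c) = c"
  by (simp_all add: ones_mat_def)
lemma ones_index[simp]: "i < r \<Longrightarrow> j < c \<Longrightarrow> ones_mat r c $$ (i, j) = 1"
  by (simp add: ones_mat_def)

lemma B_circ_n: assumes "n \<ge> 4" shows "wheel_B n = circ_mat (n - 1) (betaW (n - 1))"
proof -
  have nm: "n - 1 + 1 = n" using assms by simp
  show ?thesis using wheel_B_circ[of "n - 1"] unfolding nm .
qed

lemma X_circ_n: "wheel_X n = circ_mat (n - 1) (wheel_b n)"
  unfolding wheel_X_def ..

lemma B_carrier[simp]: "n \<ge> 4 \<Longrightarrow> wheel_B n \<in> carrier_mat (n - 1) (n - 1)"
  by (simp add: B_circ_n)
lemma X_carrier[simp]: "wheel_X n \<in> carrier_mat (n - 1) (n - 1)"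
  by (simp add: X_circ_n)

lemma rec_n: assumes n: "n \<ge> 4" and t: "t < n - 1"
  shows "3 * wheel_b n t + wheel_b n ((t + (n - 1) - 1) mod (n - 1)) + wheel_b n ((t + 1) mod (n - 1))
    = 2 * (if t = 0 then real (n - 1) else 0) - 2"
proof -
  have nm: "n - 1 + 1 = n" using n by simp
  have m3: "n - 1 \<ge> 3" using n by simp
  show ?thesis using b_rec[OF m3 t] unfolding nm .
qed

lemma sum_b: assumes n: "n \<ge> 4" shows "(\<Sum>d<n - 1. wheel_b n d) = 0"
proof -
  define m where "m = n - 1"
  have m3: "m \<ge> 3" using n by (simp add: m_def)
  let ?b = "wheel_b n"
  have rec: "\<And>t. t < m \<Longrightarrow> 3 * ?b t + ?b ((t + m - 1) mod m) + ?b ((t + 1) mod m)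
    = 2 * (if t = 0 then real m else 0) - 2"
    using rec_n[OF n] unfolding m_def by simp
  have s1: "(\<Sum>t<m. ?b ((t + m - 1) mod m)) = (\<Sum>d<m. ?b d)" using m3 by (intro shift1) simp
  have e: "\<And>t. t + m - (m - 1) = t + 1" using m3 by simp
  have s2: "(\<Sum>t<m. ?b ((t + 1) mod m)) = (\<Sum>d<m. ?b d)"
    using shift1[of "m - 1" m ?b] m3 unfolding e by simp
  have "(\<Sum>t<m. 3 * ?b t + ?b ((t + m - 1) mod m) + ?b ((t + 1) mod m))
     = 3 * (\<Sum>d<m. ?b d) + (\<Sum>t<m. ?b ((t + m - 1) mod m)) + (\<Sum>t<m. ?b ((t + 1) mod m))"
    by (simp only: sum.distrib sum_distrib_left)
  also have "\<dots> = 5 * (\<Sum>d<m. ?b d)" unfolding s1 s2 by simp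
  finally have "5 * (\<Sum>d<m. ?b d) = (\<Sum>t<m. 3 * ?b t + ?b ((t + m - 1) mod m) + ?b ((t + 1) mod m))"
    by simp
  also have "\<dots> = (\<Sum>t<m. 2 * (if t = 0 then real m else 0) - 2)"
  proof (rule sum.cong[OF refl])
    fix t assume "t \<in> {..<m}"
    then have "t < m" by simp
    then show "3 * ?b t + ?b ((t + m - 1) mod m) + ?b ((t + 1) mod m) = 2 * (if t = 0 then real m else 0) - 2"
      by (rule rec)
  qed
  also have "\<dots> = 0"
  proof -
    have e: "\<And>t. 2 * (if t = 0 then real m else 0) - 2 = (if t = 0 then 2 * real m else 0) - 2" by simp
    have "(\<Sum>t<m. 2 * (if t = 0 then real m else 0) - 2) = (\<Sum>t<m. (if t = 0 then 2 * real m else 0) - 2)"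
      unfolding e ..
    also have "\<dots> = 2 * real m - 2 * real m" using m3 by (simp add: sum_subtractf)
    finally show ?thesis by simp
  qed
  finally show ?thesis unfolding m_def by simp
qed

lemma BX_n: assumes n: "n \<ge> 4"
  shows "wheel_B n * wheel_X n = 2 \<cdot>\<^sub>m ((real n - 1) \<cdot>\<^sub>m 1\<^sub>m (n - 1) - ones_mat (n - 1) (n - 1))"
proof -
  define m where "m = n - 1"
  have m3: "m \<ge> 3" and nm: "real n - 1 = real m" using n by (auto simp: m_def)
  have Bc: "wheel_B n = circ_mat m (betaW m)" using B_circ_n[OF n] unfolding m_def .
  have Xc: "wheel_X n = circ_mat m (wheel_b n)" unfolding X_circ_n m_def ..
  have rec: "\<And>t. t < m \<Longrightarrow> 3 * wheel_b n t + wheel_b n ((t + m - 1) mod m) + wheel_b n ((t + 1) mod m)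
    = 2 * (if t = 0 then real m else 0) - 2"
    using rec_n[OF n] unfolding m_def by simp
  have "wheel_B n * wheel_X n = circ_mat m (\<lambda>t. \<Sum>d<m. betaW m d * wheel_b n ((t + m - d) mod m))"
    unfolding Bc Xc circ_mult ..
  also have "\<dots> = circ_mat m (\<lambda>t. 2 * (if t = 0 then real m else 0) - 2)"
  proof (rule circ_cong)
    fix t assume t: "t < m"
    have "(\<Sum>d<m. betaW m d * wheel_b n ((t + m - d) mod m)) = 3 * wheel_b n ((t + m - 0) mod m)
       + wheel_b n ((t + m - 1) mod m) + wheel_b n ((t + m - (m - 1)) mod m)"
      by (rule sum3[OF m3])
    moreover have "(t + m - 0) mod m = t" using t by simp
    moreover have "t + m - (m - 1) = t + 1" using m3 by simp
    ultimately have "(\<Sum>d<m. betaW m d * wheel_b n ((t + m - d) mod m)) = 3 * wheel_b n t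
       + wheel_b n ((t + m - 1) mod m) + wheel_b n ((t + 1) mod m)" by simp
    then show "(\<Sum>d<m. betaW m d * wheel_b n ((t + m - d) mod m)) = 2 * (if t = 0 then real m else 0) - 2"
      using rec[OF t] by simp
  qed
  also have "\<dots> = 2 \<cdot>\<^sub>m ((real n - 1) \<cdot>\<^sub>m 1\<^sub>m m - ones_mat m m)"
    by (rule eq_matI) (auto simp: circ_mat_def circ_zero_iff nm)
  finally show ?thesis unfolding m_def .
qed

lemma BJ_n: assumes n: "n \<ge> 4"
  shows "wheel_B n * ones_mat (n - 1) (n - 1) = 5 \<cdot>\<^sub>m ones_mat (n - 1) (n - 1)"
proof -
  define m where "m = n - 1"
  have m3: "m \<ge> 3" using n by (auto simp: m_def)
  have Bc: "wheel_B n = circ_mat m (betaW m)" using B_circ_n[OF n] unfolding m_def .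
  have J: "ones_mat m m = circ_mat m (\<lambda>_. 1)" by (rule eq_matI) (auto simp: circ_mat_def)
  have "wheel_B n * ones_mat m m = circ_mat m (\<lambda>t. \<Sum>d<m. betaW m d * 1)"
    unfolding Bc J circ_mult ..
  also have "\<dots> = circ_mat m (\<lambda>t. 5)"
    using sum3[OF m3, of "\<lambda>_. 1"] by simp
  also have "\<dots> = 5 \<cdot>\<^sub>m ones_mat m m" by (rule eq_matI) (auto simp: circ_mat_def)
  finally show ?thesis unfolding m_def .
qed

lemma Bu_n: assumes n: "n \<ge> 4"
  shows "wheel_B n * ones_mat (n - 1) 1 = 5 \<cdot>\<^sub>m ones_mat (n - 1) 1"
proof -
  define m where "m = n - 1"
  have m3: "m \<ge> 3" using n by (auto simp: m_def)
  have Bc: "wheel_B n = circ_mat m (betaW m)" using B_circ_n[OF n] unfolding m_def .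
  have "circ_mat m (betaW m) * ones_mat m 1 = 5 \<cdot>\<^sub>m ones_mat m 1"
  proof (rule eq_matI)
    fix i j assume "i < dim_row (5 \<cdot>\<^sub>m ones_mat m 1)" "j < dim_col (5 \<cdot>\<^sub>m ones_mat m 1)"
    then have i: "i < m" and j: "j = 0" by auto
    have "(circ_mat m (betaW m) * ones_mat m 1) $$ (i, j) = (\<Sum>k<m. betaW m ((k + m - i) mod m))"
      using i j by (simp add: circ_mat_def scalar_prod_def lessThan_atLeast0)
    also have "\<dots> = (\<Sum>d<m. betaW m d)" using i by (rule shift1)
    also have "\<dots> = 5" using sum3[OF m3, of "\<lambda>_. 1"] by simp
    finally show "(circ_mat m (betaW m) * ones_mat m 1) $$ (i, j) = (5 \<cdot>\<^sub>m ones_mat m 1) $$ (i, j)"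
      using i j by simp
  qed auto
  then show ?thesis unfolding Bc m_def .
qed

lemma vX_n: assumes n: "n \<ge> 4"
  shows "ones_mat 1 (n - 1) * wheel_X n = 0\<^sub>m 1 (n - 1)"
proof -
  define m where "m = n - 1"
  have "ones_mat 1 m * circ_mat m (wheel_b n) = 0\<^sub>m 1 m"
  proof (rule eq_matI)
    fix i j assume "i < dim_row (0\<^sub>m 1 m :: real mat)" "j < dim_col (0\<^sub>m 1 m :: real mat)"
    then have i: "i = 0" and j: "j < m" by auto
    have "(ones_mat 1 m * circ_mat m (wheel_b n)) $$ (i, j) = (\<Sum>k<m. wheel_b n ((j + m - k) mod m))"
      using i j by (simp add: circ_mat_def scalar_prod_def lessThan_atLeast0)
    also have "\<dots> = (\<Sum>d<m. wheel_b n d)" using j by (rule shift2)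
    also have "\<dots> = 0" using sum_b[OF n] unfolding m_def .
    finally show "(ones_mat 1 m * circ_mat m (wheel_b n)) $$ (i, j) = (0\<^sub>m 1 m :: real mat) $$ (i, j)"
      using i j by simp
  qed auto
  then show ?thesis unfolding X_circ_n m_def .
qed



lemma QP_n: assumes n: "n \<ge> 4" shows "wheel_Q n * wheel_Qplus n = 1\<^sub>m n"
proof -
  define m where "m = n - 1"
  have m3: "m \<ge> 3" and nm: "n = 1 + m" and rn: "real n - 1 = real m" using n by (auto simp: m_def)
  have mpos: "real m > 0" using m3 by simp
  let ?B = "wheel_B n" and ?X = "wheel_X n"
  have Bc: "?B \<in> carrier_mat m m" using B_carrier[OF n] unfolding m_def .
  have Xc: "?X \<in> carrier_mat m m" using X_carrier[of n] unfolding m_def .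
  have BX: "?B * ?X = 2 \<cdot>\<^sub>m (real m \<cdot>\<^sub>m 1\<^sub>m m - ones_mat m m)"
    using BX_n[OF n] unfolding rn m_def[symmetric] .
  have BJ: "?B * ones_mat m m = 5 \<cdot>\<^sub>m ones_mat m m" using BJ_n[OF n] unfolding m_def[symmetric] .
  have Bu: "?B * ones_mat m 1 = 5 \<cdot>\<^sub>m ones_mat m 1" using Bu_n[OF n] unfolding m_def[symmetric] .
  have vX: "ones_mat 1 m * ?X = 0\<^sub>m 1 m" using vX_n[OF n] unfolding m_def[symmetric] .
  define F where "F = four_block_mat (mat 1 1 (\<lambda>_. 5)) (- ones_mat 1 m) (- ones_mat m 1)
     (ones_mat m m + 2 \<cdot>\<^sub>m ?X)"
  define Q where "Q = four_block_mat (mat 1 1 (\<lambda>_. real m)) (ones_mat 1 m) (ones_mat m 1) ?B"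
  have Qe: "wheel_Q n = Q" unfolding wheel_Q_def Q_def rn m_def ..
  have Pe: "wheel_Qplus n = (1 / (4 * real m)) \<cdot>\<^sub>m F" unfolding wheel_Qplus_def F_def rn m_def ..
  have Qc: "Q \<in> carrier_mat (1 + m) (1 + m)" unfolding Q_def
    by (rule four_block_carrier_mat) (use Bc in auto)
  have Fc: "F \<in> carrier_mat (1 + m) (1 + m)" unfolding F_def
    by (rule four_block_carrier_mat) (use Xc in auto)
  have QF: "Q * F = four_block_mat
     (mat 1 1 (\<lambda>_. real m) * mat 1 1 (\<lambda>_. 5) + ones_mat 1 m * - ones_mat m 1)
     (mat 1 1 (\<lambda>_. real m) * - ones_mat 1 m + ones_mat 1 m * (ones_mat m m + 2 \<cdot>\<^sub>m ?X))
     (ones_mat m 1 * mat 1 1 (\<lambda>_. 5) + ?B * - ones_mat m 1)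
     (ones_mat m 1 * - ones_mat 1 m + ?B * (ones_mat m m + 2 \<cdot>\<^sub>m ?X))"
    unfolding Q_def F_def
    by (rule mult_four_block_mat) (use Bc Xc in auto)
  have TL: "mat 1 1 (\<lambda>_. real m) * mat 1 1 (\<lambda>_. 5) + ones_mat 1 m * - ones_mat m 1 = mat 1 1 (\<lambda>_. 4 * real m)"
    by (rule eq_matI) (auto simp: scalar_prod_def)
  have d1: "ones_mat 1 m * (ones_mat m m + 2 \<cdot>\<^sub>m ?X) = ones_mat 1 m * ones_mat m m + 2 \<cdot>\<^sub>m (ones_mat 1 m * ?X)"
    using mult_add_distrib_mat[OF ones_carrier ones_carrier smult_carrier_mat[OF Xc]]
      mult_smult_distrib[OF ones_carrier Xc] by simp
  have TR: "mat 1 1 (\<lambda>_. real m) * - ones_mat 1 m + ones_mat 1 m * (ones_mat m m + 2 \<cdot>\<^sub>m ?X) = 0\<^sub>m 1 m"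
    unfolding d1 vX by (rule eq_matI) (auto simp: scalar_prod_def)
  have BL: "ones_mat m 1 * mat 1 1 (\<lambda>_. 5) + ?B * - ones_mat m 1 = 0\<^sub>m m 1"
  proof -
    have "?B * - ones_mat m 1 = - (?B * ones_mat m 1)"
      by (rule uminus_mult_right_mat) (use Bc in simp)
    then show ?thesis unfolding Bu by (intro eq_matI) (auto simp: scalar_prod_def)
  qed
  have d2: "?B * (ones_mat m m + 2 \<cdot>\<^sub>m ?X) = ?B * ones_mat m m + 2 \<cdot>\<^sub>m (?B * ?X)"
    using mult_add_distrib_mat[OF Bc ones_carrier smult_carrier_mat[OF Xc]]
      mult_smult_distrib[OF Bc Xc] by simp
  have BR: "ones_mat m 1 * - ones_mat 1 m + ?B * (ones_mat m m + 2 \<cdot>\<^sub>m ?X) = (4 * real m) \<cdot>\<^sub>m 1\<^sub>m m"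
    unfolding d2 BJ BX by (rule eq_matI) (auto simp: scalar_prod_def)
  have QF2: "Q * F = (4 * real m) \<cdot>\<^sub>m 1\<^sub>m (1 + m)"
    unfolding QF TL TR BL BR by (rule eq_matI) auto
  have "wheel_Q n * wheel_Qplus n = (1 / (4 * real m)) \<cdot>\<^sub>m (Q * F)"
    unfolding Qe Pe by (rule mult_smult_distrib[OF Qc Fc])
  also have "\<dots> = 1\<^sub>m n" unfolding QF2 nm using mpos by (intro eq_matI) auto
  finally show ?thesis .
qed

lemma Q_carrier: assumes n: "n \<ge> 4" shows "wheel_Q n \<in> carrier_mat n n"
proof -
  have "wheel_Q n \<in> carrier_mat (1 + (n - 1)) (1 + (n - 1))"
    unfolding wheel_Q_def by (rule four_block_carrier_mat) (use B_carrier[OF n] in auto)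
  then show ?thesis using n by simp
qed

lemma P_carrier: assumes n: "n \<ge> 4" shows "wheel_Qplus n \<in> carrier_mat n n"
proof -
  have "wheel_Qplus n \<in> carrier_mat (1 + (n - 1)) (1 + (n - 1))"
    unfolding wheel_Qplus_def
    by (intro smult_carrier_mat four_block_carrier_mat) (use X_carrier[of n] in auto)
  then show ?thesis using n by simp
qed

theorem mainTheorem5:
  fixes n :: nat
  assumes "n \<ge> 4"
  shows "invertible_mat (wheel_C n * transpose_mat (wheel_C n) + 1\<^sub>m (n - 1))
    \<and> (\<forall>M. inverts_mat (wheel_C n * transpose_mat (wheel_C n) + 1\<^sub>m (n - 1)) M
            \<and> inverts_mat M (wheel_C n * transpose_mat (wheel_C n) + 1\<^sub>m (n - 1))
          \<longrightarrow> wheel_X n = 2 \<cdot>\<^sub>m (M * ((real n - 1) \<cdot>\<^sub>m 1\<^sub>m (n - 1) - ones_mat (n - 1) (n - 1))))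
    \<and> is_moore_penrose_inverse (wheel_Q n) (wheel_Qplus n)"
proof -
  have n: "n \<ge> 4" by fact
  define m where "m = n - 1"
  have m3: "m \<ge> 3" and rn: "real n - 1 = real m" using n by (auto simp: m_def)
  have mpos: "real m > 0" using m3 by simp
  have nm1: "n - 1 + 1 = n" using n by simp
  have CB: "wheel_C n * transpose_mat (wheel_C n) + 1\<^sub>m (n - 1) = wheel_B n"
    using CCT[of "n - 1"] n unfolding nm1 by simp
  let ?B = "wheel_B n" and ?X = "wheel_X n"
  have Bc: "?B \<in> carrier_mat m m" using B_carrier[OF n] unfolding m_def .
  have Xc: "?X \<in> carrier_mat m m" using X_carrier[of n] unfolding m_def .
  have BX: "?B * ?X = 2 \<cdot>\<^sub>m (real m \<cdot>\<^sub>m 1\<^sub>m m - ones_mat m m)"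
    using BX_n[OF n] unfolding rn m_def[symmetric] .
  have BJ: "?B * ones_mat m m = 5 \<cdot>\<^sub>m ones_mat m m" using BJ_n[OF n] unfolding m_def[symmetric] .
  define Y where "Y = (1 / (2 * real m)) \<cdot>\<^sub>m ?X + (1 / (5 * real m)) \<cdot>\<^sub>m ones_mat m m"
  have Yc: "Y \<in> carrier_mat m m" unfolding Y_def using Xc by simp
  have "?B * Y = (1 / (2 * real m)) \<cdot>\<^sub>m (?B * ?X) + (1 / (5 * real m)) \<cdot>\<^sub>m (?B * ones_mat m m)"
    unfolding Y_def
    using mult_add_distrib_mat[OF Bc smult_carrier_mat[OF Xc] smult_carrier_mat[OF ones_carrier]]
      mult_smult_distrib[OF Bc Xc] mult_smult_distrib[OF Bc ones_carrier] by simp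
  also have "\<dots> = 1\<^sub>m m" unfolding BX BJ using mpos by (intro eq_matI) (auto simp: field_simps)
  finally have BY: "?B * Y = 1\<^sub>m m" .
  have YB: "Y * ?B = 1\<^sub>m m" by (rule mat_mult_left_right_inverse[OF Bc Yc BY])
  have part1: "invertible_mat ?B"
    unfolding invertible_mat_def inverts_mat_def using Bc Yc BY YB by auto
  have part2: "\<forall>M. inverts_mat ?B M \<and> inverts_mat M ?B
      \<longrightarrow> ?X = 2 \<cdot>\<^sub>m (M * ((real n - 1) \<cdot>\<^sub>m 1\<^sub>m (n - 1) - ones_mat (n - 1) (n - 1)))"
  proof (intro allI impI)
    fix M assume h: "inverts_mat ?B M \<and> inverts_mat M ?B"
    then have h1: "?B * M = 1\<^sub>m m" and h2: "M * ?B = 1\<^sub>m (dim_row M)"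
      using Bc unfolding inverts_mat_def by auto
    have "dim_col (?B * M) = m" using h1 by simp
    then have cM: "dim_col M = m" by simp
    have "dim_col (M * ?B) = dim_row M" using h2 by simp
    then have rM: "dim_row M = m" using Bc by simp
    have Mc: "M \<in> carrier_mat m m" using cM rM by auto
    have Kc: "real m \<cdot>\<^sub>m 1\<^sub>m m - ones_mat m m \<in> carrier_mat m m"
      by (rule minus_carrier_mat) simp
    have "?X = 1\<^sub>m m * ?X" using Xc by simp
    also have "\<dots> = (M * ?B) * ?X" using h2 rM by simp
    also have "\<dots> = M * (?B * ?X)" by (rule assoc_mult_mat[OF Mc Bc Xc])
    also have "\<dots> = 2 \<cdot>\<^sub>m (M * (real m \<cdot>\<^sub>m 1\<^sub>m m - ones_mat m m))"
      unfolding BX by (rule mult_smult_distrib[OF Mc Kc])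
    finally show "?X = 2 \<cdot>\<^sub>m (M * ((real n - 1) \<cdot>\<^sub>m 1\<^sub>m (n - 1) - ones_mat (n - 1) (n - 1)))"
      unfolding rn m_def .
  qed
  have Qc: "wheel_Q n \<in> carrier_mat n n" by (rule Q_carrier[OF n])
  have Pc: "wheel_Qplus n \<in> carrier_mat n n" by (rule P_carrier[OF n])
  have QP: "wheel_Q n * wheel_Qplus n = 1\<^sub>m n" by (rule QP_n[OF n])
  have PQ: "wheel_Qplus n * wheel_Q n = 1\<^sub>m n" by (rule mat_mult_left_right_inverse[OF Qc Pc QP])
  have part3: "is_moore_penrose_inverse (wheel_Q n) (wheel_Qplus n)"
    unfolding is_moore_penrose_inverse_def QP PQ using Qc Pc by simp
  show ?thesis unfolding CB using part1 part2 part3 by blast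
qed

end
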